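(* Let $H$ be a hypergroup with hyperoperation $*$ and let $\equiv$ be a congruence relation on $H$. Let $H/\equiv=\{[a]:a\in H\}$ be the set of equivalence classes, with hyperoperation $[x]\boxdot[y]=\{[z]: z\in x'*y' \text{ for some } x',y'\in H \text{ with } [x']=[x],[y']=[y]\}$. Then $(H/\equiv,\boxdot)$ is a hypergroup.
   Context: A hypergroup is a nonempty set $H$ with $*:H\times H\to P^*(H)$ (nonempty subsets), extended to subsets by unions, which is associative, has a unique identity $e$ ($e*x=x*e=\{x\}$), unique inverses $h^{-1}$ with $e\in(h^{-1}*h)\cap(h*h^{-1})$, and is reversible ($c\in a*b\Rightarrow a\in c*b^{-1},\ b\in a^{-1}*c$). For an equivalence relation $\equiv$ on $H$ and subsets $A,B\subseteq H$, write $A\equiv B$ if for every $a\in A$ and $b\in B$ there exist $b'\in A$ and $a'\in B$ with $a\equiv a'$ and $b\equiv b'$. A congruence relation on $H$ is an equivalence relation $\equiv$ such that (i) if $a\equiv x$ and $b\equiv y$ then $a*b\equiv x*y$ and $b*a\equiv y*x$; (ii) if $a\equiv b$ then $a^{-1}\equiv b^{-1}$. *)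

theory Defs
  imports Main
begin

definition hyperext :: "('a \<Rightarrow> 'a \<Rightarrow> 'a set) \<Rightarrow> 'a set \<Rightarrow> 'a set \<Rightarrow> 'a set" where
  "hyperext f A B = (\<Union>a\<in>A. \<Union>b\<in>B. f a b)"

definition hg_ident :: "'a set \<Rightarrow> ('a \<Rightarrow> 'a \<Rightarrow> 'a set) \<Rightarrow> 'a \<Rightarrow> bool" where
  "hg_ident H f e \<longleftrightarrow> e \<in> H \<and> (\<forall>x\<in>H. f e x = {x} \<and> f x e = {x})"

definition hident :: "'a set \<Rightarrow> ('a \<Rightarrow> 'a \<Rightarrow> 'a set) \<Rightarrow> 'a" where
  "hident H f = (THE e. hg_ident H f e)"

definition hg_inv :: "'a set \<Rightarrow> ('a \<Rightarrow> 'a \<Rightarrow> 'a set) \<Rightarrow> 'a \<Rightarrow> 'a \<Rightarrow> 'a \<Rightarrow> bool" where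
  "hg_inv H f e h h' \<longleftrightarrow> h' \<in> H \<and> e \<in> f h' h \<and> e \<in> f h h'"

definition hinv :: "'a set \<Rightarrow> ('a \<Rightarrow> 'a \<Rightarrow> 'a set) \<Rightarrow> 'a \<Rightarrow> 'a" where
  "hinv H f h = (THE h'. hg_inv H f (hident H f) h h')"

definition hypergroup :: "'a set \<Rightarrow> ('a \<Rightarrow> 'a \<Rightarrow> 'a set) \<Rightarrow> bool" where
  "hypergroup H f \<longleftrightarrow>
     H \<noteq> {} \<and>
     (\<forall>a\<in>H. \<forall>b\<in>H. f a b \<noteq> {} \<and> f a b \<subseteq> H) \<and>
     (\<forall>a\<in>H. \<forall>b\<in>H. \<forall>c\<in>H.
        hyperext f (f a b) {c} = hyperext f {a} (f b c)) \<and>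
     (\<exists>!e. hg_ident H f e) \<and>
     (\<forall>h\<in>H. \<exists>!h'. hg_inv H f (hident H f) h h') \<and>
     (\<forall>a\<in>H. \<forall>b\<in>H. \<forall>c\<in>H. c \<in> f a b \<longrightarrow>
        a \<in> f c (hinv H f b) \<and> b \<in> f (hinv H f a) c)"

definition set_equiv :: "('a \<times> 'a) set \<Rightarrow> 'a set \<Rightarrow> 'a set \<Rightarrow> bool" where
  "set_equiv r A B \<longleftrightarrow> (\<forall>a\<in>A. \<forall>b\<in>B. \<exists>b'\<in>A. \<exists>a'\<in>B. (a, a') \<in> r \<and> (b, b') \<in> r)"

definition hg_congruence :: "'a set \<Rightarrow> ('a \<Rightarrow> 'a \<Rightarrow> 'a set) \<Rightarrow> ('a \<times> 'a) set \<Rightarrow> bool" where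
  "hg_congruence H f r \<longleftrightarrow> equiv H r \<and>
     (\<forall>a x b y. (a, x) \<in> r \<longrightarrow> (b, y) \<in> r \<longrightarrow>
        set_equiv r (f a b) (f x y) \<and> set_equiv r (f b a) (f y x)) \<and>
     (\<forall>a b. (a, b) \<in> r \<longrightarrow> (hinv H f a, hinv H f b) \<in> r)"

definition quot_hyperop :: "('a \<times> 'a) set \<Rightarrow> ('a \<Rightarrow> 'a \<Rightarrow> 'a set) \<Rightarrow> 'a set \<Rightarrow> 'a set \<Rightarrow> 'a set set" where
  "quot_hyperop r f X Y = {r `` {z} | z. \<exists>x' y'. x' \<in> X \<and> y' \<in> Y \<and> z \<in> f x' y'}"

end

theory Submission
  imports Defs
begin

locale qctx =
  fixes H :: "'a set" and f :: "'a \<Rightarrow> 'a \<Rightarrow> 'a set" and r :: "('a \<times> 'a) set"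
  assumes hg: "hypergroup H f" and cg: "hg_congruence H f r"
begin

lemma eqv: "equiv H r" using cg by (simp add: hg_congruence_def)

lemma rH: "(a,b) \<in> r \<Longrightarrow> a \<in> H \<and> b \<in> H" using equiv_type[OF eqv] by blast

lemma fH: "a \<in> H \<Longrightarrow> b \<in> H \<Longrightarrow> f a b \<noteq> {} \<and> f a b \<subseteq> H"
  using hg by (simp add: hypergroup_def)

lemma assoc: "a \<in> H \<Longrightarrow> b \<in> H \<Longrightarrow> c \<in> H \<Longrightarrow>
   hyperext f (f a b) {c} = hyperext f {a} (f b c)"
  using hg by (simp add: hypergroup_def)

lemma cong: assumes "(a,x) \<in> r" "(b,y) \<in> r" "t \<in> f x y"
  shows "\<exists>t'\<in>f a b. (t,t') \<in> r"
proof -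
  have se: "set_equiv r (f a b) (f x y)" using cg assms(1,2) by (simp add: hg_congruence_def)
  have "a \<in> H" "b \<in> H" using rH assms by auto
  then obtain a0 where "a0 \<in> f a b" using fH by blast
  then show ?thesis using se assms(3) unfolding set_equiv_def by blast
qed

definition cl where "cl z = r `` {z}"

lemma cl_eq: "x \<in> H \<Longrightarrow> y \<in> H \<Longrightarrow> cl x = cl y \<longleftrightarrow> (x,y) \<in> r"
  unfolding cl_def using eq_equiv_class_iff[OF eqv] by blast

lemma Q: assumes "x \<in> H" "y \<in> H"
  shows "quot_hyperop r f (cl x) (cl y) = cl ` f x y"
proof
  show "quot_hyperop r f (cl x) (cl y) \<subseteq> cl ` f x y"
  proof
    fix W assume "W \<in> quot_hyperop r f (cl x) (cl y)"
    then obtain z x' y' where W: "W = cl z" and xy: "(x,x') \<in> r" "(y,y') \<in> r" and z: "z \<in> f x' y'"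
      unfolding quot_hyperop_def cl_def by blast
    obtain t where t: "t \<in> f x y" "(z,t) \<in> r" using cong[OF xy z] by blast
    have "cl z = cl t" using t rH cl_eq by blast
    then show "W \<in> cl ` f x y" using W t by blast
  qed
next
  show "cl ` f x y \<subseteq> quot_hyperop r f (cl x) (cl y)"
  proof
    fix W assume "W \<in> cl ` f x y"
    then obtain z where "W = cl z" "z \<in> f x y" by blast
    moreover have "x \<in> cl x" "y \<in> cl y" using assms eqv unfolding cl_def equiv_def refl_on_def by auto
    ultimately show "W \<in> quot_hyperop r f (cl x) (cl y)"
      unfolding quot_hyperop_def cl_def by blast
  qed
qed

lemma quotE: "X \<in> H // r \<Longrightarrow> (\<And>x. X = cl x \<Longrightarrow> x \<in> H \<Longrightarrow> P) \<Longrightarrow> P"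
  unfolding cl_def by (erule quotientE) blast

lemma clQ: "x \<in> H \<Longrightarrow> cl x \<in> H // r" unfolding cl_def by (rule quotientI)

definition e where "e = hident H f"

lemma e_ident: "hg_ident H f e"
proof -
  have "\<exists>!e. hg_ident H f e" using hg by (simp add: hypergroup_def)
  then show ?thesis unfolding e_def hident_def by (rule theI')
qed

lemma eH: "e \<in> H" using e_ident unfolding hg_ident_def by blast

lemma e_l: "x \<in> H \<Longrightarrow> f e x = {x}" and e_r: "x \<in> H \<Longrightarrow> f x e = {x}"
  using e_ident unfolding hg_ident_def by blast+

definition i where "i h = hinv H f h"

lemma i_inv: "h \<in> H \<Longrightarrow> hg_inv H f e h (i h)"
proof -
  assume "h \<in> H"
  then have "\<exists>!h'. hg_inv H f e h h'" using hg by (simp add: hypergroup_def e_def)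
  then show ?thesis unfolding i_def hinv_def e_def[symmetric] by (rule theI')
qed

lemma iH: "h \<in> H \<Longrightarrow> i h \<in> H" using i_inv unfolding hg_inv_def by blast

lemma rev: "a \<in> H \<Longrightarrow> b \<in> H \<Longrightarrow> c \<in> H \<Longrightarrow> c \<in> f a b \<Longrightarrow> a \<in> f c (i b) \<and> b \<in> f (i a) c"
  using hg unfolding hypergroup_def i_def by blast

lemma Qq_ident: "hg_ident (H // r) (quot_hyperop r f) (cl e)"
  unfolding hg_ident_def
proof (intro conjI ballI)
  show "cl e \<in> H // r" using clQ eH by blast
  fix X assume "X \<in> H // r"
  then obtain x where x: "X = cl x" "x \<in> H" by (rule quotE)
  show "quot_hyperop r f (cl e) X = {X}" using x Q eH e_l by simp
  show "quot_hyperop r f X (cl e) = {X}" using x Q eH e_r by simp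
qed

lemma Qq_ident_uniq: "hg_ident (H // r) (quot_hyperop r f) E \<Longrightarrow> E = cl e"
proof -
  assume E: "hg_ident (H // r) (quot_hyperop r f) E"
  then have "E \<in> H // r" by (simp add: hg_ident_def)
  then obtain x where x: "E = cl x" "x \<in> H" by (rule quotE)
  have "quot_hyperop r f E (cl e) = {cl e}" using E clQ[OF eH] by (simp add: hg_ident_def)
  moreover have "quot_hyperop r f E (cl e) = {cl x}" using x Q eH e_r by simp
  ultimately show ?thesis using x by simp
qed

lemma hident_Q: "hident (H // r) (quot_hyperop r f) = cl e"
  unfolding hident_def using Qq_ident Qq_ident_uniq by (rule the_equality)

lemma Qinv: assumes h: "h \<in> H"
  shows "hg_inv (H // r) (quot_hyperop r f) (cl e) (cl h) (cl (i h))"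
  unfolding hg_inv_def
proof (intro conjI)
  show "cl (i h) \<in> H // r" using clQ iH h by blast
  have "e \<in> f (i h) h" "e \<in> f h (i h)" using i_inv[OF h] unfolding hg_inv_def by auto
  then show "cl e \<in> quot_hyperop r f (cl (i h)) (cl h)"
    "cl e \<in> quot_hyperop r f (cl h) (cl (i h))" using Q h iH by auto
qed

lemma Qinv_uniq: assumes h: "h \<in> H"
  and Y: "hg_inv (H // r) (quot_hyperop r f) (cl e) (cl h) Y"
  shows "Y = cl (i h)"
proof -
  have "Y \<in> H // r" using Y unfolding hg_inv_def by blast
  then obtain y where y: "Y = cl y" "y \<in> H" by (rule quotE)
  have "cl e \<in> cl ` f y h" using Y y Q h unfolding hg_inv_def by auto
  then obtain z where z: "z \<in> f y h" "cl e = cl z" by blast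
  have zH: "z \<in> H" using z fH y h by blast
  have ez: "(e,z) \<in> r" using z cl_eq eH zH by blast
  have "y \<in> f z (i h)" using rev[OF y(2) h zH z(1)] by blast
  moreover have "(i h, i h) \<in> r" using eqv iH h unfolding equiv_def refl_on_def by blast
  ultimately obtain t where "t \<in> f e (i h)" "(y,t) \<in> r" using cong ez by blast
  then have "(y, i h) \<in> r" using e_l iH h by auto
  then show ?thesis using y cl_eq iH h by auto
qed

lemma hinv_Q: "h \<in> H \<Longrightarrow> hinv (H // r) (quot_hyperop r f) (cl h) = cl (i h)"
  unfolding hinv_def hident_Q using Qinv Qinv_uniq by (rule the_equality)

lemma main: "hypergroup (H // r) (quot_hyperop r f)"
  unfolding hypergroup_def
proof (intro conjI ballI impI)
  show "H // r \<noteq> {}" using clQ eH by blast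
next
  fix A B assume "A \<in> H // r" "B \<in> H // r"
  then obtain a b where ab: "A = cl a" "a \<in> H" "B = cl b" "b \<in> H" by (metis quotE)
  show "quot_hyperop r f A B \<noteq> {}" using ab Q fH by simp
  show "quot_hyperop r f A B \<subseteq> H // r"
  proof
    fix W assume "W \<in> quot_hyperop r f A B"
    moreover have "quot_hyperop r f A B = cl ` f a b" using ab Q by simp
    ultimately obtain z where z: "W = cl z" "z \<in> f a b" by blast
    have "f a b \<subseteq> H" using fH ab(2,4) by simp
    then have "z \<in> H" using z(2) by (rule subsetD)
    then show "W \<in> H // r" using z clQ by simp
  qed
next
  fix A B C assume "A \<in> H // r" "B \<in> H // r" "C \<in> H // r"
  then obtain a b c where ab: "A = cl a" "a \<in> H" "B = cl b" "b \<in> H" "C = cl c" "c \<in> H"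
    by (metis quotE)
  have sab: "f a b \<subseteq> H" "f b c \<subseteq> H" using fH ab by auto
  have "hyperext (quot_hyperop r f) (quot_hyperop r f A B) {C}
      = (\<Union>w\<in>f a b. quot_hyperop r f (cl w) (cl c))"
    using ab Q[of a b] unfolding hyperext_def by simp
  also have "\<dots> = (\<Union>w\<in>f a b. cl ` f w c)"
    using sab(1) ab(6) Q by (intro SUP_cong) auto
  also have "\<dots> = cl ` hyperext f (f a b) {c}" unfolding hyperext_def by blast
  also have "\<dots> = cl ` hyperext f {a} (f b c)" using assoc ab by simp
  also have "\<dots> = (\<Union>w\<in>f b c. cl ` f a w)" unfolding hyperext_def by blast
  also have "\<dots> = (\<Union>w\<in>f b c. quot_hyperop r f (cl a) (cl w))"
    using sab(2) ab(2) Q by (intro SUP_cong) auto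
  also have "\<dots> = hyperext (quot_hyperop r f) {A} (quot_hyperop r f B C)"
    using ab Q[of b c] unfolding hyperext_def by simp
  finally show "hyperext (quot_hyperop r f) (quot_hyperop r f A B) {C} =
    hyperext (quot_hyperop r f) {A} (quot_hyperop r f B C)" .
next
  show "\<exists>!E. hg_ident (H // r) (quot_hyperop r f) E" using Qq_ident Qq_ident_uniq by blast
next
  fix X assume "X \<in> H // r"
  then obtain h where h: "X = cl h" "h \<in> H" by (rule quotE)
  show "\<exists>!h'. hg_inv (H // r) (quot_hyperop r f) (hident (H // r) (quot_hyperop r f)) X h'"
    unfolding hident_Q h using Qinv Qinv_uniq h by blast
next
  fix A B C assume "A \<in> H // r" "B \<in> H // r" "C \<in> H // r"
    and C: "C \<in> quot_hyperop r f A B"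
  then obtain a b where ab: "A = cl a" "a \<in> H" "B = cl b" "b \<in> H" by (metis quotE)
  then obtain c where c: "C = cl c" "c \<in> f a b" using C Q by auto
  have cH: "c \<in> H" using c fH ab by blast
  have rv: "a \<in> f c (i b)" "b \<in> f (i a) c" using rev ab cH c by auto
  show "A \<in> quot_hyperop r f C (hinv (H // r) (quot_hyperop r f) B)"
    using rv ab c cH hinv_Q Q iH by auto
  show "B \<in> quot_hyperop r f (hinv (H // r) (quot_hyperop r f) A) C"
    using rv ab c cH hinv_Q Q iH by auto
qed

end

theorem proposition4p13:
  fixes H :: "'a set" and f :: "'a \<Rightarrow> 'a \<Rightarrow> 'a set" and r :: "('a \<times> 'a) set"
  assumes "hypergroup H f" and "hg_congruence H f r"
  shows "hypergroup (H // r) (quot_hyperop r f)"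
proof -
  interpret qctx H f r using assms by unfold_locales
  show ?thesis by (rule main)
qed

end
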